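(* Let $(\mathcal{X},d)$ be a metric space with the following barycenter property: for every $K\ge1$, every $\boldsymbol{w}\in\Delta^{K-1}$ and every $\boldsymbol{a}=(a_1,\dots,a_K)\in\mathcal{X}^K$ the function $C\mapsto\sum_{s=1}^K w_s d^2(a_s,C)$ attains its minimum on $\mathcal{X}$. Let $\boldsymbol{a}=(a_1,\dots,a_K)\in\mathcal{X}^K$, $\boldsymbol{w}\in\Delta^{K-1}$, and let $C_{\boldsymbol{a}}\in\arg\min_{C\in\mathcal{X}}\sum_{s=1}^K w_s d^2(a_s,C)$. Fix $\alpha\in[0,1]$ and assume $\boldsymbol{b}=(b_1,\dots,b_K)\in\mathcal{X}^K$ satisfies, for all $s=1,\dots,K$, $$d(a_s,C_{\boldsymbol{a}})=d(a_s,b_s)+d(b_s,C_{\boldsymbol{a}}),\qquad d(b_s,a_s)=(1-\alpha^{1/2})\,d(a_s,C_{\boldsymbol{a}}).$$ Then $\boldsymbol{b}$ is a solution of $$\inf_{\boldsymbol{b}'\in\mathcal{X}^K}\Big\{\sum_{s=1}^K w_s d^2(b'_s,a_s)\;:\;\min_{C\in\mathcal{X}}\sum_{s=1}^K w_s d^2(b'_s,C)\le\alpha\sum_{s=1}^K w_s d^2(a_s,C_{\boldsymbol{a}})\Big\}.$$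
   Context: $\Delta^{K-1}$ denotes the probability simplex in $\mathbb{R}^K$. In the constraint, $\min_{C}\sum_s w_s d^2(b'_s,C)$ equals $\sum_s w_s d^2(b'_s,C_{\boldsymbol{b}'})$ for any weighted barycenter $C_{\boldsymbol{b}'}$ of $\boldsymbol{b}'$. *)

theory Defs
  imports "HOL-Analysis.Analysis"
begin

text \<open>Index set {0..<K}; tuples are functions nat => 'x restricted to indices < K.\<close>

definition prob_simplex :: "nat \<Rightarrow> (nat \<Rightarrow> real) set" where
  "prob_simplex K = {w. (\<forall>s<K. 0 \<le> w s) \<and> (\<Sum>s<K. w s) = 1}"

definition wcost :: "nat \<Rightarrow> (nat \<Rightarrow> real) \<Rightarrow> (nat \<Rightarrow> 'x::metric_space) \<Rightarrow> 'x \<Rightarrow> real" where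
  "wcost K w a C = (\<Sum>s<K. w s * (dist (a s) C)\<^sup>2)"

definition barycenter_property :: "'x::metric_space itself \<Rightarrow> bool" where
  "barycenter_property _ \<longleftrightarrow>
     (\<forall>K\<ge>1. \<forall>w\<in>prob_simplex K. \<forall>a::nat \<Rightarrow> 'x.
        \<exists>C. \<forall>C'. wcost K w a C \<le> wcost K w a C')"

definition is_barycenter :: "nat \<Rightarrow> (nat \<Rightarrow> real) \<Rightarrow> (nat \<Rightarrow> 'x::metric_space) \<Rightarrow> 'x \<Rightarrow> bool" where
  "is_barycenter K w a C \<longleftrightarrow> (\<forall>C'. wcost K w a C \<le> wcost K w a C')"

text \<open>min over C of the weighted cost (attained under the barycenter property).\<close>
definition minwcost :: "nat \<Rightarrow> (nat \<Rightarrow> real) \<Rightarrow> (nat \<Rightarrow> 'x::metric_space) \<Rightarrow> real" where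
  "minwcost K w a = Inf (range (wcost K w a))"

definition transport_cost :: "nat \<Rightarrow> (nat \<Rightarrow> real) \<Rightarrow> (nat \<Rightarrow> 'x::metric_space) \<Rightarrow> (nat \<Rightarrow> 'x) \<Rightarrow> real" where
  "transport_cost K w b a = (\<Sum>s<K. w s * (dist (b s) (a s))\<^sup>2)"

end

theory Submission
  imports Defs
begin

lemma wcost_nonneg:
  assumes "w \<in> prob_simplex K"
  shows "0 \<le> wcost K w a C"
  using assms unfolding wcost_def prob_simplex_def by (auto intro!: sum_nonneg)

lemma L2_weighted:
  assumes "w \<in> prob_simplex K"
  shows "L2_set (\<lambda>s. sqrt (w s) * f s) {..<K} = sqrt (\<Sum>s<K. w s * (f s)\<^sup>2)"
proof -
  have "\<And>s. s \<in> {..<K} \<Longrightarrow> (sqrt (w s) * f s)\<^sup>2 = w s * (f s)\<^sup>2"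
    using assms unfolding prob_simplex_def by (simp add: power_mult_distrib)
  then show ?thesis unfolding L2_set_def by (metis (no_types, lifting) sum.cong)
qed

theorem lemma1:
  fixes a b :: "nat \<Rightarrow> 'x::metric_space" and w :: "nat \<Rightarrow> real"
    and K :: nat and Ca :: 'x and \<alpha> :: real
  assumes bary: "barycenter_property TYPE('x)"
    and K: "K \<ge> 1"
    and w: "w \<in> prob_simplex K"
    and Ca: "is_barycenter K w a Ca"
    and \<alpha>: "0 \<le> \<alpha>" "\<alpha> \<le> 1"
    and geo: "\<forall>s<K. dist (a s) Ca = dist (a s) (b s) + dist (b s) Ca"
    and frac: "\<forall>s<K. dist (b s) (a s) = (1 - sqrt \<alpha>) * dist (a s) Ca"
  shows "minwcost K w b \<le> \<alpha> * wcost K w a Ca \<and>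
         (\<forall>b'::nat \<Rightarrow> 'x. minwcost K w b' \<le> \<alpha> * wcost K w a Ca \<longrightarrow>
            transport_cost K w b a \<le> transport_cost K w b' a)"
proof
  define D where "D = wcost K w a Ca"
  have D0: "0 \<le> D" unfolding D_def using wcost_nonneg[OF w] .
  have sa: "0 \<le> sqrt \<alpha>" "sqrt \<alpha> \<le> 1" using \<alpha> by auto
  have bC: "dist (b s) Ca = sqrt \<alpha> * dist (a s) Ca" if "s < K" for s
    using geo frac that by (simp add: dist_commute algebra_simps)
  have "wcost K w b Ca = (\<Sum>s<K. w s * (sqrt \<alpha> * dist (a s) Ca)\<^sup>2)"
    unfolding wcost_def using bC by (auto intro!: sum.cong)
  also have "\<dots> = \<alpha> * D"
    unfolding D_def wcost_def using \<alpha>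
    by (simp add: power_mult_distrib sum_distrib_left algebra_simps)
  finally have wb: "wcost K w b Ca = \<alpha> * D" .
  have bdd: "bdd_below (range (wcost K w c))" for c :: "nat \<Rightarrow> 'x"
    using wcost_nonneg[OF w] by (intro bdd_belowI[where m=0]) auto
  have "minwcost K w b \<le> wcost K w b Ca"
    unfolding minwcost_def by (rule cInf_lower[OF _ bdd]) auto
  then show "minwcost K w b \<le> \<alpha> * wcost K w a Ca" using wb D_def by simp
  have tb: "transport_cost K w b a = (1 - sqrt \<alpha>)\<^sup>2 * D"
  proof -
    have "transport_cost K w b a = (\<Sum>s<K. w s * ((1 - sqrt \<alpha>) * dist (a s) Ca)\<^sup>2)"
      unfolding transport_cost_def using frac by (auto intro!: sum.cong)
    also have "\<dots> = (1 - sqrt \<alpha>)\<^sup>2 * D"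
      unfolding D_def wcost_def sum_distrib_left power_mult_distrib
      by (intro sum.cong refl) (simp only: mult_ac)
    finally show ?thesis .
  qed
  show "\<forall>b'::nat \<Rightarrow> 'x. minwcost K w b' \<le> \<alpha> * wcost K w a Ca \<longrightarrow>
            transport_cost K w b a \<le> transport_cost K w b' a"
  proof (intro allI impI)
    fix b' :: "nat \<Rightarrow> 'x"
    assume hb': "minwcost K w b' \<le> \<alpha> * wcost K w a Ca"
    obtain C' where C': "\<forall>C''. wcost K w b' C' \<le> wcost K w b' C''"
      using bary K w unfolding barycenter_property_def by blast
    have "minwcost K w b' = wcost K w b' C'"
      unfolding minwcost_def by (rule cInf_eq_minimum) (use C' in auto)
    with hb' have Y: "wcost K w b' C' \<le> \<alpha> * D" by (simp add: D_def)
    have DC: "D \<le> wcost K w a C'" using Ca unfolding is_barycenter_def D_def by blast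
    define f where "f s = sqrt (w s) * dist (b' s) (a s)" for s
    define g where "g s = sqrt (w s) * dist (b' s) C'" for s
    define h where "h s = sqrt (w s) * dist (a s) C'" for s
    have "L2_set h {..<K} \<le> L2_set (\<lambda>s. f s + g s) {..<K}"
    proof (rule L2_set_mono)
      fix s assume "s \<in> {..<K}"
      have "dist (a s) C' \<le> dist (b' s) (a s) + dist (b' s) C'"
        by (metis dist_commute dist_triangle)
      then show "h s \<le> f s + g s" unfolding h_def f_def g_def
        using w \<open>s \<in> {..<K}\<close> unfolding prob_simplex_def
        by (simp add: distrib_left[symmetric] mult_left_mono)
      show "0 \<le> h s" unfolding h_def
        using w \<open>s \<in> {..<K}\<close> unfolding prob_simplex_def by simp
    qed
    also have "\<dots> \<le> L2_set f {..<K} + L2_set g {..<K}" by (rule L2_set_triangle_ineq)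
    finally have tri: "L2_set h {..<K} \<le> L2_set f {..<K} + L2_set g {..<K}" .
    have Lh: "L2_set h {..<K} = sqrt (wcost K w a C')"
      unfolding h_def wcost_def by (rule L2_weighted[OF w])
    have Lg: "L2_set g {..<K} = sqrt (wcost K w b' C')"
      unfolding g_def wcost_def by (rule L2_weighted[OF w])
    have Lf: "L2_set f {..<K} = sqrt (transport_cost K w b' a)"
      unfolding f_def transport_cost_def by (rule L2_weighted[OF w])
    have s1: "sqrt D \<le> sqrt (wcost K w a C')" using DC by simp
    have s2: "sqrt (wcost K w b' C') \<le> sqrt \<alpha> * sqrt D"
      using Y by (simp add: real_sqrt_mult[symmetric])
    have "(1 - sqrt \<alpha>) * sqrt D = sqrt D - sqrt \<alpha> * sqrt D" by (simp add: algebra_simps)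
    then have "(1 - sqrt \<alpha>) * sqrt D \<le> sqrt (transport_cost K w b' a)"
      using tri Lh Lg Lf s1 s2 by linarith
    moreover have "0 \<le> (1 - sqrt \<alpha>) * sqrt D" using sa D0 by simp
    ultimately have "((1 - sqrt \<alpha>) * sqrt D)\<^sup>2 \<le> (sqrt (transport_cost K w b' a))\<^sup>2"
      by (rule power_mono)
    moreover have "0 \<le> transport_cost K w b' a"
      using w unfolding transport_cost_def prob_simplex_def by (auto intro!: sum_nonneg)
    ultimately show "transport_cost K w b a \<le> transport_cost K w b' a"
      using tb D0 by (simp add: power_mult_distrib)
  qed
qed

end
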